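(* For $k\ge1$, the linear simplex $\alpha$ code $\mathcal{S}_k^\alpha$ has type $(q^{sk};k,0,\dots,0)$.
   Context: Let $R$ be a finite commutative chain ring with maximal ideal $\langle\gamma\rangle$, nilpotency index $s$ and residue field $R/\langle\gamma\rangle\cong\mathbb{F}_q$. Fix coset representatives $T=\{e_0,\dots,e_{q-1}\}$ with $e_0=0,e_1=1$, ordered $e_0<\dots<e_{q-1}$; each $r\in R$ is uniquely $\sum_{i=0}^{s-1}r_i\gamma^i$, $r_i\in T$; order $R$ by $x>y$ iff $x_i>y_i$ in $T$ for the largest $i$ with $x_i\neq y_i$; list $R=\{\rho_0,\dots,\rho_{q^s-1}\}$ increasingly. $\mathbf{a}^{(m)}$ is the constant vector of length $m$. Define $G_1^\alpha=(\rho_0\ \cdots\ \rho_{q^s-1})$ and, for $k>1$, $G_k^\alpha$ as the $k\times q^{sk}$ matrix of $q^s$ column blocks, the $j$-th having first row $\boldsymbol{\rho_j}^{(q^{s(k-1)})}$ and $G_{k-1}^\alpha$ below. $\mathcal{S}_k^\alpha$ is the $R$-submodule of $R^{q^{sk}}$ generated by the rows of $G_k^\alpha$. A linear code $\mathcal{C}\subseteq R^n$ (an $R$-submodule) has type $(n;t_1,\dots,t_s)$ if $\mathcal{C}\cong\bigoplus_{i=1}^s (R/\langle\gamma^{s-i+1}\rangle)^{t_i}$ as $R$-modules (equivalently, up to column permutations and multiplication of columns by units it has a standard-form generator matrix with $t_i$ rows divisible exactly by $\gamma^{i-1}$ forming the diagonal block $\gamma^{i-1}I_{t_i}$); these $t_i$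 are unique. Type $(n;k,0,\dots,0)$ means $\mathcal{C}$ is free of rank $k$. *)

theory Defs
  imports Main
begin

definition is_ideal :: "'r::comm_ring_1 set \<Rightarrow> bool" where
  "is_ideal I \<longleftrightarrow> 0 \<in> I \<and> (\<forall>x\<in>I. \<forall>y\<in>I. x + y \<in> I) \<and> (\<forall>r. \<forall>x\<in>I. r * x \<in> I)"

definition principal_ideal :: "'r::comm_ring_1 \<Rightarrow> 'r set" where
  "principal_ideal g = range (\<lambda>x. g * x)"

definition maximal_ideal :: "'r::comm_ring_1 set \<Rightarrow> bool" where
  "maximal_ideal M \<longleftrightarrow> is_ideal M \<and> M \<noteq> UNIV \<and>
     (\<forall>J. is_ideal J \<and> M \<subseteq> J \<longrightarrow> J = M \<or> J = UNIV)"

definition chain_ring :: "'r::comm_ring_1 itself \<Rightarrow> bool" where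
  "chain_ring _ \<longleftrightarrow> (\<forall>I J :: 'r set. is_ideal I \<and> is_ideal J \<longrightarrow> I \<subseteq> J \<or> J \<subseteq> I)"

text \<open>Standing assumptions: finite commutative chain ring with maximal ideal generated by
  gamma, nilpotency index s, and e 0,...,e (q-1) a system of coset representatives of the
  residue field (so the residue field has q elements), with e 0 = 0, e 1 = 1, ordered by index.\<close>
definition chain_ring_setup :: "'r::{comm_ring_1,finite} \<Rightarrow> nat \<Rightarrow> nat \<Rightarrow> (nat \<Rightarrow> 'r) \<Rightarrow> bool" where
  "chain_ring_setup \<gamma> s q e \<longleftrightarrow>
     chain_ring TYPE('r) \<and> maximal_ideal (principal_ideal \<gamma>) \<and>
     s \<ge> 1 \<and> \<gamma> ^ s = 0 \<and> \<gamma> ^ (s - 1) \<noteq> 0 \<and>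
     e 0 = 0 \<and> e 1 = 1 \<and>
     (\<forall>i<q. \<forall>j<q. e i - e j \<in> principal_ideal \<gamma> \<longrightarrow> i = j) \<and>
     (\<forall>r. \<exists>i<q. r - e i \<in> principal_ideal \<gamma>)"

definition digits :: "'r::comm_ring_1 \<Rightarrow> nat \<Rightarrow> nat \<Rightarrow> (nat \<Rightarrow> 'r) \<Rightarrow> 'r \<Rightarrow> nat \<Rightarrow> 'r" where
  "digits \<gamma> s q e r = (THE d. (\<forall>i<s. d i \<in> e ` {..<q}) \<and> (\<forall>i\<ge>s. d i = 0) \<and>
                              r = (\<Sum>i<s. d i * \<gamma> ^ i))"

definition tidx :: "nat \<Rightarrow> (nat \<Rightarrow> 'r) \<Rightarrow> 'r \<Rightarrow> nat" where
  "tidx q e t = (THE j. j < q \<and> e j = t)"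

definition ring_less :: "'r::comm_ring_1 \<Rightarrow> nat \<Rightarrow> nat \<Rightarrow> (nat \<Rightarrow> 'r) \<Rightarrow> 'r \<Rightarrow> 'r \<Rightarrow> bool" where
  "ring_less \<gamma> s q e x y \<longleftrightarrow>
     (\<exists>i<s. tidx q e (digits \<gamma> s q e x i) < tidx q e (digits \<gamma> s q e y i) \<and>
            (\<forall>j. i < j \<and> j < s \<longrightarrow> digits \<gamma> s q e x j = digits \<gamma> s q e y j))"

text \<open>rho j: the j-th element of R in increasing order (rho_0 < rho_1 < ...).\<close>
definition rho :: "'r::comm_ring_1 \<Rightarrow> nat \<Rightarrow> nat \<Rightarrow> (nat \<Rightarrow> 'r) \<Rightarrow> nat \<Rightarrow> 'r" where
  "rho \<gamma> s q e j = (THE x. card {y. ring_less \<gamma> s q e y x} = j)"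

text \<open>The generator matrix G_k^alpha (rows and columns indexed from 0): the j-th column block
  (of width (q^s)^(k-1)) has first row constantly rho_j and G_(k-1)^alpha below.\<close>
fun simplex_gen :: "'r::comm_ring_1 \<Rightarrow> nat \<Rightarrow> nat \<Rightarrow> (nat \<Rightarrow> 'r) \<Rightarrow> nat \<Rightarrow> nat \<Rightarrow> nat \<Rightarrow> 'r" where
  "simplex_gen \<gamma> s q e 0 r c = 0"
| "simplex_gen \<gamma> s q e (Suc k) 0 c = rho \<gamma> s q e (c div (q ^ s) ^ k)"
| "simplex_gen \<gamma> s q e (Suc k) (Suc r) c = simplex_gen \<gamma> s q e k r (c mod (q ^ s) ^ k)"

text \<open>Vectors of R^n are functions nat => R vanishing at indices >= n.
  The simplex code S_k^alpha: the R-submodule of R^(q^(sk)) generated by the rows of G_k^alpha.\<close>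
definition simplex_code :: "'r::comm_ring_1 \<Rightarrow> nat \<Rightarrow> nat \<Rightarrow> (nat \<Rightarrow> 'r) \<Rightarrow> nat \<Rightarrow> (nat \<Rightarrow> 'r) set" where
  "simplex_code \<gamma> s q e k =
     {v. \<exists>c :: nat \<Rightarrow> 'r. v = (\<lambda>i. if i < q ^ (s * k) then (\<Sum>r<k. c r * simplex_gen \<gamma> s q e k r i) else 0)}"

text \<open>A linear code C in R^n has type (n; t_1,...,t_s) (ts = [t_1,...,t_s]) iff C is isomorphic
  to the direct sum of (R/<gamma^(s-i+1)>)^(t_i): i.e. there are generators g i j (block i, 0-indexed,
  j < t_(i+1)) such that c |-> sum c i j * g i j maps all coefficient families onto C with
  kernel exactly the families with gamma^(s-i) dividing c i j.\<close>
definition code_type :: "'r::comm_ring_1 \<Rightarrow> nat \<Rightarrow> nat \<Rightarrow> (nat \<Rightarrow> 'r) set \<Rightarrow> nat list \<Rightarrow> bool" where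
  "code_type \<gamma> s n C ts \<longleftrightarrow>
     length ts = s \<and> C \<subseteq> {v. \<forall>i\<ge>n. v i = 0} \<and>
     (\<exists>g :: nat \<Rightarrow> nat \<Rightarrow> nat \<Rightarrow> 'r.
        (\<forall>i<s. \<forall>j<ts ! i. g i j \<in> C) \<and>
        C = {v. \<exists>c. v = (\<lambda>x. \<Sum>i<s. \<Sum>j<ts ! i. c i j * g i j x)} \<and>
        (\<forall>c. (\<forall>x. (\<Sum>i<s. \<Sum>j<ts ! i. c i j * g i j x) = 0) \<longleftrightarrow>
             (\<forall>i<s. \<forall>j<ts ! i. \<gamma> ^ (s - i) dvd c i j)))"

end

theory Submission
  imports Defs
begin

locale csetup =
  fixes \<gamma> :: "'r::{comm_ring_1,finite}" and s q :: nat and e :: "nat \<Rightarrow> 'r"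
  assumes hsu: "chain_ring_setup \<gamma> s q e"
begin

lemma inP: "x \<in> principal_ideal \<gamma> \<longleftrightarrow> \<gamma> dvd x"
  by (auto simp: principal_ideal_def dvd_def)

lemma s_ge: "s \<ge> 1" and gs: "\<gamma> ^ s = 0" and gs1: "\<gamma> ^ (s - 1) \<noteq> 0"
  and e0: "e 0 = 0" and e1: "e 1 = 1"
  and rep_inj: "\<And>i j. i < q \<Longrightarrow> j < q \<Longrightarrow> \<gamma> dvd (e i - e j) \<Longrightarrow> i = j"
  and rep_ex: "\<And>r. \<exists>i<q. \<gamma> dvd (r - e i)"
  and maxP: "maximal_ideal (principal_ideal \<gamma>)"
  and chain: "chain_ring TYPE('r)"
  using hsu by (auto simp: chain_ring_setup_def inP)

lemma ideal_pr: "is_ideal (principal_ideal (x::'r))"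
  unfolding is_ideal_def principal_ideal_def
proof (intro conjI ballI allI)
  show "0 \<in> range ((*) x)" by (rule image_eqI[of _ _ 0]) auto
next
  fix a b assume "a \<in> range ((*) x)" "b \<in> range ((*) x)"
  then obtain u v where "a = x * u" "b = x * v" by auto
  then show "a + b \<in> range ((*) x)" by (intro image_eqI[of _ _ "u + v"]) (auto simp: algebra_simps)
next
  fix r a assume "a \<in> range ((*) x)"
  then obtain u where "a = x * u" by auto
  then show "r * a \<in> range ((*) x)" by (intro image_eqI[of _ _ "r * u"]) (auto simp: algebra_simps)
qed

lemma nonunit: assumes "\<not> x dvd 1" shows "\<gamma> dvd x"
proof -
  have xI: "x \<in> principal_ideal x" unfolding principal_ideal_def by (rule image_eqI[of _ _ 1]) auto
  from chain have "principal_ideal x \<subseteq> principal_ideal \<gamma> \<or> principal_ideal \<gamma> \<subseteq> principal_ideal x"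
    using ideal_pr[of x] ideal_pr[of \<gamma>] unfolding chain_ring_def by blast
  then show ?thesis
  proof
    assume "principal_ideal x \<subseteq> principal_ideal \<gamma>" then show ?thesis using xI inP by blast
  next
    assume h: "principal_ideal \<gamma> \<subseteq> principal_ideal x"
    with maxP ideal_pr[of x] have "principal_ideal x = principal_ideal \<gamma> \<or> principal_ideal x = UNIV"
      unfolding maximal_ideal_def by blast
    then show ?thesis
    proof
      assume "principal_ideal x = UNIV"
      then have "1 \<in> principal_ideal x" by simp
      then have "x dvd 1" by (auto simp: principal_ideal_def dvd_def)
      with assms show ?thesis by simp
    qed (use xI inP in blast)
  qed
qed

lemma unit_plus: assumes "\<not> \<gamma> dvd a" shows "(a + \<gamma> * t) dvd 1"
proof (rule ccontr)
  assume "\<not> (a + \<gamma> * t) dvd 1"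
  then have "\<gamma> dvd (a + \<gamma> * t)" by (rule nonunit)
  then have "\<gamma> dvd (a + \<gamma> * t - \<gamma> * t)" by (intro dvd_diff) auto
  with assms show False by simp
qed

lemma gpow_nz: "j < s \<Longrightarrow> \<gamma> ^ j \<noteq> 0"
proof
  assume "j < s" "\<gamma> ^ j = 0"
  then have "s - 1 = j + (s - 1 - j)" by simp
  then have "\<gamma> ^ (s - 1) = \<gamma> ^ j * \<gamma> ^ (s - 1 - j)"
    by (metis power_add)
  with \<open>\<gamma> ^ j = 0\<close> gs1 show False by simp
qed

lemma uniq_aux:
  "\<And>j a. j + m \<le> s \<Longrightarrow> (\<forall>i<m. \<gamma> dvd a i \<longrightarrow> a i = 0) \<Longrightarrow>
     \<gamma> ^ j * (\<Sum>i<m. a i * \<gamma> ^ i) = 0 \<Longrightarrow> \<forall>i<m. a i = 0"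
proof (induction m)
  case 0 then show ?case by simp
next
  case (Suc m)
  have eq: "(\<Sum>i<Suc m. a i * \<gamma> ^ i) = a 0 + \<gamma> * (\<Sum>i<m. a (Suc i) * \<gamma> ^ i)"
    unfolding sum.lessThan_Suc_shift by (simp add: sum_distrib_left algebra_simps del: sum.lessThan_Suc)
  have a0: "a 0 = 0"
  proof (rule ccontr)
    assume "a 0 \<noteq> 0"
    with Suc.prems(2) have "\<not> \<gamma> dvd a 0" by auto
    then have u: "(a 0 + \<gamma> * (\<Sum>i<m. a (Suc i) * \<gamma> ^ i)) dvd 1" by (rule unit_plus)
    from Suc.prems(3) eq have "\<gamma> ^ j * (a 0 + \<gamma> * (\<Sum>i<m. a (Suc i) * \<gamma> ^ i)) = 0" by simp
    moreover from u obtain w where "1 = (a 0 + \<gamma> * (\<Sum>i<m. a (Suc i) * \<gamma> ^ i)) * w"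
      by (auto elim: dvdE)
    ultimately have "\<gamma> ^ j = 0"
      by (metis mult.assoc mult_1_right mult_zero_left)
    with gpow_nz[of j] Suc.prems(1) show False by simp
  qed
  have "\<gamma> ^ (Suc j) * (\<Sum>i<m. a (Suc i) * \<gamma> ^ i) = 0"
  proof -
    have "\<gamma> ^ (Suc j) * (\<Sum>i<m. a (Suc i) * \<gamma> ^ i) = \<gamma> ^ j * (a 0 + \<gamma> * (\<Sum>i<m. a (Suc i) * \<gamma> ^ i))"
      using a0 by (simp add: mult.assoc)
    also have "\<dots> = 0" using Suc.prems(3) eq by simp
    finally show ?thesis .
  qed
  moreover have "Suc j + m \<le> s" using Suc.prems(1) by simp
  moreover have "\<forall>i<m. \<gamma> dvd a (Suc i) \<longrightarrow> a (Suc i) = 0" using Suc.prems(2) by simp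
  ultimately have h: "\<forall>i<m. a (Suc i) = 0"
    using Suc.IH[of "Suc j" "\<lambda>i. a (Suc i)"] by blast
  show ?case
  proof (intro allI impI)
    fix i assume "i < Suc m" then show "a i = 0" using a0 h by (cases i) auto
  qed
qed


lemma exist_aux:
  "\<exists>d t. (\<forall>i<m. d i \<in> e ` {..<q}) \<and> (\<forall>i\<ge>m. d i = 0) \<and> r = (\<Sum>i<m. d i * \<gamma> ^ i) + \<gamma> ^ m * t"
proof (induction m)
  case 0 show ?case by (rule exI[of _ "\<lambda>_. 0"], rule exI[of _ r]) simp
next
  case (Suc m)
  then obtain d t where d: "\<forall>i<m. d i \<in> e ` {..<q}" "\<forall>i\<ge>m. d i = 0"
    and r: "r = (\<Sum>i<m. d i * \<gamma> ^ i) + \<gamma> ^ m * t" by blast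
  obtain j where j: "j < q" "\<gamma> dvd (t - e j)" using rep_ex by blast
  then obtain t' where t': "t - e j = \<gamma> * t'" by (auto elim: dvdE)
  define d' where "d' = d(m := e j)"
  have s1: "(\<Sum>i<m. d' i * \<gamma> ^ i) = (\<Sum>i<m. d i * \<gamma> ^ i)"
    by (rule sum.cong) (auto simp: d'_def)
  have "r = (\<Sum>i<m. d i * \<gamma> ^ i) + \<gamma> ^ m * (e j + \<gamma> * t')" using r t'
    by (metis add_diff_cancel_left' diff_add_cancel)
  also have "\<dots> = (\<Sum>i<Suc m. d' i * \<gamma> ^ i) + \<gamma> ^ Suc m * t'"
    using s1 by (simp add: d'_def algebra_simps)
  finally have "r = (\<Sum>i<Suc m. d' i * \<gamma> ^ i) + \<gamma> ^ Suc m * t'" .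
  moreover have "\<forall>i<Suc m. d' i \<in> e ` {..<q}" using d(1) j(1) by (auto simp: d'_def less_Suc_eq)
  moreover have "\<forall>i\<ge>Suc m. d' i = 0" using d(2) by (auto simp: d'_def)
  ultimately show ?case by blast
qed

definition DP :: "'r \<Rightarrow> (nat \<Rightarrow> 'r) \<Rightarrow> bool" where
  "DP r d \<longleftrightarrow> (\<forall>i<s. d i \<in> e ` {..<q}) \<and> (\<forall>i\<ge>s. d i = 0) \<and> r = (\<Sum>i<s. d i * \<gamma> ^ i)"

lemma DP_ex: "\<exists>d. DP r d"
  using exist_aux[of s r] gs by (auto simp: DP_def)

lemma DP_uniq: assumes "DP r d" "DP r d'" shows "d = d'"
proof
  fix i
  define a where "a = (\<lambda>i. d i - d' i)"
  have "(\<Sum>i<s. a i * \<gamma> ^ i) = (\<Sum>i<s. d i * \<gamma> ^ i) - (\<Sum>i<s. d' i * \<gamma> ^ i)"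
    by (simp add: a_def algebra_simps sum_subtractf)
  also have "\<dots> = 0" using assms by (simp add: DP_def)
  finally have z: "\<gamma> ^ 0 * (\<Sum>i<s. a i * \<gamma> ^ i) = 0" by simp
  have "\<forall>i<s. \<gamma> dvd a i \<longrightarrow> a i = 0"
  proof (intro allI impI)
    fix i assume i: "i < s" "\<gamma> dvd a i"
    have "d i \<in> e ` {..<q}" "d' i \<in> e ` {..<q}" using assms i by (auto simp: DP_def)
    then obtain x y where "x < q" "y < q" "d i = e x" "d' i = e y" by blast
    with i rep_inj[of x y] show "a i = 0" by (auto simp: a_def)
  qed
  with uniq_aux[of 0 s a] z have "\<forall>i<s. a i = 0" by simp
  then show "d i = d' i" using assms by (cases "i < s") (auto simp: a_def DP_def)
qed

abbreviation "dg \<equiv> digits \<gamma> s q e"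
abbreviation "lss \<equiv> ring_less \<gamma> s q e"

lemma dg_DP: "DP r (dg r)"
proof -
  have "\<exists>!d. DP r d" using DP_ex DP_uniq by blast
  then have "DP r (THE d. DP r d)" by (rule theI')
  then show ?thesis unfolding digits_def DP_def[symmetric] .
qed

lemma dg_eq: "DP r d \<Longrightarrow> dg r = d"
  using DP_uniq dg_DP by blast

lemma dg_in: "i < s \<Longrightarrow> \<exists>j<q. dg r i = e j"
  using dg_DP[of r] by (auto simp: DP_def)

lemma dg_ge: "i \<ge> s \<Longrightarrow> dg r i = 0"
  using dg_DP[of r] by (auto simp: DP_def)

lemma dg_sum: "r = (\<Sum>i<s. dg r i * \<gamma> ^ i)"
  using dg_DP[of r] by (auto simp: DP_def)

lemma e_inj: "i < q \<Longrightarrow> j < q \<Longrightarrow> e i = e j \<Longrightarrow> i = j"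
  using rep_inj by fastforce

lemma tidx_e: "j < q \<Longrightarrow> tidx q e (e j) = j"
  unfolding tidx_def by (rule the1_equality) (use e_inj in auto)

lemma q2: "q \<ge> 2"
proof (rule ccontr)
  assume "\<not> q \<ge> 2"
  obtain i where "i < q" "\<gamma> dvd (1 - e i)" using rep_ex by blast
  moreover from \<open>i < q\<close> \<open>\<not> q \<ge> 2\<close> have "i = 0" by simp
  ultimately have "\<gamma> dvd 1" using e0 by simp
  then have "\<And>x. x \<in> principal_ideal \<gamma>" using inP by (meson dvd_trans one_dvd)
  with maxP show False unfolding maximal_ideal_def by auto
qed

lemma zero_ne_one_r: "(0::'r) \<noteq> 1"
proof
  assume "(0::'r) = 1"
  then have "\<gamma> dvd (e 1 - e 0)" by (simp add: e0 e1)
  with rep_inj[of 1 0] q2 show False by simp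
qed

lemma tidx0: "tidx q e 0 = 0" using tidx_e[of 0] e0 q2 by simp
lemma tidx1: "tidx q e 1 = 1" using tidx_e[of 1] e1 q2 by simp

lemma dg0: "dg 0 = (\<lambda>_. 0)"
  by (rule dg_eq) (use q2 e0 in \<open>auto simp: DP_def intro!: image_eqI[of _ _ 0]\<close>)

lemma dg1: "dg 1 = (\<lambda>i. if i = 0 then 1 else 0)"
proof (rule dg_eq)
  obtain s' where s': "s = Suc s'" using s_ge by (cases s) auto
  have "(\<Sum>i<s. (if i = 0 then 1 else 0) * \<gamma> ^ i) = (1::'r)"
    unfolding s' sum.lessThan_Suc_shift by (simp del: sum.lessThan_Suc)
  then show "DP 1 (\<lambda>i. if i = 0 then 1 else 0)"
    using q2 e0 e1 s_ge unfolding DP_def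
    by (auto intro!: image_eqI[of _ _ 0] image_eqI[of _ _ 1])
qed

lemma nz_digit: assumes "x \<noteq> 0" shows "\<exists>i<s. dg x i \<noteq> 0"
proof (rule ccontr)
  assume "\<not> (\<exists>i<s. dg x i \<noteq> 0)"
  then have "(\<Sum>i<s. dg x i * \<gamma> ^ i) = 0" by simp
  with dg_sum[of x] assms show False by simp
qed

lemma L1: "\<not> lss y 0"
  unfolding ring_less_def dg0 tidx0 by simp

lemma L2: assumes "x \<noteq> 0" shows "lss 0 x"
proof -
  define A where "A = {i. i < s \<and> dg x i \<noteq> 0}"
  have fA: "finite A" and nA: "A \<noteq> {}" using nz_digit[OF assms] by (auto simp: A_def)
  define i where "i = Max A"
  have iA: "i \<in> A" using fA nA by (simp add: i_def)
  have above: "\<And>j. i < j \<Longrightarrow> j < s \<Longrightarrow> dg x j = 0"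
    using fA by (metis (mono_tags, lifting) A_def Max_ge i_def leD mem_Collect_eq)
  from iA obtain j where j: "j < q" "dg x i = e j" using dg_in by (auto simp: A_def)
  have "j \<noteq> 0"
  proof
    assume "j = 0" with j e0 iA show False by (auto simp: A_def)
  qed
  then show ?thesis unfolding ring_less_def dg0 using iA above j tidx_e tidx0
    by (auto simp: A_def intro!: exI[of _ i])
qed

lemma L3: assumes "lss y 1" shows "y = 0"
proof -
  from assms obtain i where i: "i < s" "tidx q e (dg y i) < tidx q e (dg 1 i)"
    and ab: "\<forall>j. i < j \<and> j < s \<longrightarrow> dg y j = dg 1 j" unfolding ring_less_def by blast
  have "i = 0" using i(2) tidx0 by (cases "i = 0") (auto simp: dg1)
  obtain j where j: "j < q" "dg y 0 = e j" using dg_in s_ge by fastforce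
  with i \<open>i = 0\<close> have "j < 1" using tidx_e tidx1 by (simp add: dg1)
  with j e0 have d0: "dg y 0 = 0" by simp
  have "\<forall>i<s. dg y i = 0"
  proof (intro allI impI)
    fix m assume "m < s" then show "dg y m = 0" using d0 ab \<open>i = 0\<close> by (cases m) (auto simp: dg1)
  qed
  then show ?thesis using dg_sum[of y] by simp
qed

lemma L4: "lss 0 1" using L2 zero_ne_one_r by simp

lemma L5: assumes "x \<noteq> 0" "x \<noteq> 1" shows "lss 1 x"
proof -
  define A where "A = {i. i < s \<and> dg x i \<noteq> dg 1 i}"
  have "A \<noteq> {}"
  proof
    assume "A = {}"
    then have "\<forall>i<s. dg x i = dg 1 i" by (auto simp: A_def)
    then have "x = 1" using dg_sum[of x] dg_sum[of 1] by simp
    with assms show False by simp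
  qed
  have fA: "finite A" by (auto simp: A_def)
  define i where "i = Max A"
  have iA: "i \<in> A" using fA \<open>A \<noteq> {}\<close> by (simp add: i_def)
  have above: "\<And>j. i < j \<Longrightarrow> j < s \<Longrightarrow> dg x j = dg 1 j"
    using fA by (metis (mono_tags, lifting) A_def Max_ge i_def leD mem_Collect_eq)
  from iA obtain j where j: "j < q" "dg x i = e j" using dg_in by (auto simp: A_def)
  have "tidx q e (dg 1 i) < tidx q e (dg x i)"
  proof (cases "i = 0")
    case True
    have "j \<noteq> 1" using iA True j e1 by (auto simp: A_def dg1)
    moreover have "j \<noteq> 0"
    proof
      assume "j = 0"
      then have "\<forall>m<s. dg x m = 0" using above True j e0
        by (metis dg1 gr0I)
      then show False using dg_sum[of x] assms(1) by simp
    qed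
    ultimately show ?thesis using True j tidx_e tidx1 by (simp add: dg1)
  next
    case False
    have "j \<noteq> 0"
    proof
      assume "j = 0" with j e0 iA False show False by (auto simp: A_def dg1)
    qed
    then show ?thesis using False j tidx_e tidx0 by (simp add: dg1)
  qed
  then show ?thesis unfolding ring_less_def using iA above by (auto simp: A_def)
qed

lemma rho0: "rho \<gamma> s q e 0 = 0"
  unfolding rho_def
proof (rule the1_equality)
  show "card {y. lss y 0} = 0" using L1 by simp
  show "\<exists>!x. card {y. lss y x} = 0"
  proof (rule ex1I[of _ 0])
    show "card {y. lss y 0} = 0" using L1 by simp
  next
    fix x assume c: "card {y. lss y x} = 0"
    show "x = 0"
    proof (rule ccontr)
      assume "x \<noteq> 0"
      then have "0 \<in> {y. lss y x}" using L2 by simp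
      then have "card {y. lss y x} \<noteq> 0" by (simp add: card_gt_0_iff[symmetric]) (auto simp: card_gt_0_iff)
      with c show False by simp
    qed
  qed
qed

lemma rho1: "rho \<gamma> s q e 1 = 1"
  unfolding rho_def
proof (rule the1_equality)
  have eq: "{y. lss y 1} = {0}" using L3 L4 by auto
  show "card {y. lss y 1} = 1" unfolding eq by simp
  show "\<exists>!x. card {y. lss y x} = 1"
  proof (rule ex1I[of _ 1])
    show "card {y. lss y 1} = 1" unfolding eq by simp
  next
    fix x assume c: "card {y. lss y x} = 1"
    have "x \<noteq> 0" using c L1 by auto
    show "x = 1"
    proof (rule ccontr)
      assume "x \<noteq> 1"
      then have "{0, 1} \<subseteq> {y. lss y x}" using L2 L5 \<open>x \<noteq> 0\<close> by auto
      then have "card {0, (1::'r)} \<le> card {y. lss y x}" by (rule card_mono[rotated]) simp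
      with zero_ne_one_r c show False by simp
    qed
  qed
qed

lemma col_exists:
  "\<And>f. (\<forall>r<k. f r < q ^ s) \<Longrightarrow>
     \<exists>c<(q ^ s) ^ k. \<forall>r<k. simplex_gen \<gamma> s q e k r c = rho \<gamma> s q e (f r)"
proof (induction k)
  case 0 show ?case by simp
next
  case (Suc k)
  define Q where "Q = q ^ s"
  obtain c' where c': "c' < Q ^ k" "\<forall>r<k. simplex_gen \<gamma> s q e k r c' = rho \<gamma> s q e (f (Suc r))"
    using Suc.IH[of "\<lambda>r. f (Suc r)"] Suc.prems by (auto simp: Q_def)
  define c where "c = f 0 * Q ^ k + c'"
  have f0: "f 0 < Q" using Suc.prems by (simp add: Q_def)
  have "c < (f 0 + 1) * Q ^ k" using c' by (simp add: c_def)
  also have "\<dots> \<le> Q * Q ^ k" using f0 by (intro mult_right_mono) auto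
  finally have cl: "c < Q ^ Suc k" by simp
  have pos: "Q ^ k > 0" by (rule le_less_trans[OF _ c'(1)]) simp
  have cd: "c div Q ^ k = f 0" using c'(1) pos by (simp add: c_def)
  have cm: "c mod Q ^ k = c'" using c'(1) by (simp add: c_def)
  have "\<forall>r<Suc k. simplex_gen \<gamma> s q e (Suc k) r c = rho \<gamma> s q e (f r)"
  proof (intro allI impI)
    fix r assume "r < Suc k"
    then show "simplex_gen \<gamma> s q e (Suc k) r c = rho \<gamma> s q e (f r)"
      using cd cm c'(2) by (cases r) (auto simp: Q_def)
  qed
  with cl show ?case by (auto simp: Q_def)
qed

end

lemma sum_ts:
  fixes k s :: nat
  assumes "s \<ge> 1"
  shows "(\<Sum>i<s. \<Sum>j<(k # replicate (s - 1) 0) ! i. F i j) = (\<Sum>j<k. F 0 j)"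
proof -
  obtain s' where s': "s = Suc s'" using assms by (cases s) auto
  have z: "(\<Sum>i<s'. \<Sum>j<(k # replicate s' 0) ! Suc i. F (Suc i) j) = 0"
    by (rule sum.neutral) (simp add: lessThan_0)
  show ?thesis unfolding s' sum.lessThan_Suc_shift using z by (simp del: sum.lessThan_Suc)
qed

theorem proposition3p1:
  fixes \<gamma> :: "'r::{comm_ring_1,finite}" and s q k :: nat and e :: "nat \<Rightarrow> 'r"
  assumes "chain_ring_setup \<gamma> s q e"
    and "k \<ge> 1"
  shows "code_type \<gamma> s (q ^ (s * k)) (simplex_code \<gamma> s q e k) (k # replicate (s - 1) 0)"
proof -
  interpret csetup \<gamma> s q e by unfold_locales (rule assms(1))
  define n where "n = q ^ (s * k)"
  define G where "G = simplex_gen \<gamma> s q e k"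
  define ts where "ts = k # replicate (s - 1) 0"
  define g :: "nat \<Rightarrow> nat \<Rightarrow> nat \<Rightarrow> 'r" where "g = (\<lambda>i j x. if x < n then G j x else 0)"
  have nQ: "n = (q ^ s) ^ k" by (simp add: n_def power_mult)
  have Q2: "q ^ s \<ge> 2"
  proof -
    have "2 ^ 1 \<le> q ^ s" using q2 s_ge by (meson le_trans power_increasing power_mono zero_le_numeral one_le_numeral)
    then show ?thesis by simp
  qed
  have C: "simplex_code \<gamma> s q e k = {v. \<exists>c. v = (\<lambda>x. \<Sum>j<k. c j * g 0 j x)}"
  proof -
    have "\<And>c x. (\<Sum>j<k. c j * g 0 j x) = (if x < n then \<Sum>j<k. c j * G j x else 0)"
      by (simp add: g_def)
    then show ?thesis unfolding simplex_code_def G_def n_def by simp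
  qed
  have len: "length ts = s" using s_ge by (simp add: ts_def)
  have sub: "simplex_code \<gamma> s q e k \<subseteq> {v. \<forall>i\<ge>n. v i = 0}"
    unfolding simplex_code_def n_def by auto
  have gin: "\<forall>i<s. \<forall>j<ts ! i. g i j \<in> simplex_code \<gamma> s q e k"
  proof (intro allI impI)
    fix i j assume ij: "i < s" "j < ts ! i"
    then have "i = 0" "j < k" by (cases i; simp add: ts_def)+
    have "(\<Sum>r<k. (if r = j then 1 else 0) * g 0 r x) = g i j x" for x
    proof -
      have "(\<Sum>r<k. (if r = j then 1 else 0) * g 0 r x) = (\<Sum>r<k. if r = j then g 0 r x else 0)"
        by (rule sum.cong) auto
      also have "\<dots> = g i j x" using \<open>j < k\<close> \<open>i = 0\<close> by simp
      finally show ?thesis .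
    qed
    then have "g i j = (\<lambda>x. \<Sum>r<k. (if r = j then 1 else 0) * g 0 r x)" by auto
    then show "g i j \<in> simplex_code \<gamma> s q e k" unfolding C
      unfolding mem_Collect_eq by (rule exI[of _ "\<lambda>r. if r = j then 1 else 0"])
  qed
  have span: "simplex_code \<gamma> s q e k = {v. \<exists>c. v = (\<lambda>x. \<Sum>i<s. \<Sum>j<ts ! i. c i j * g i j x)}"
    unfolding C ts_def sum_ts[OF s_ge]
  proof safe
    fix c show "\<exists>c'. (\<lambda>x. \<Sum>j<k. c j * g 0 j x) = (\<lambda>x. \<Sum>j<k. c' 0 j * g 0 j x)"
      by (rule exI[of _ "\<lambda>_. c"]) simp
  next
    fix c show "\<exists>c'. (\<lambda>x. \<Sum>j<k. c 0 j * g 0 j x) = (\<lambda>x. \<Sum>j<k. c' j * g 0 j x)"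
      by (rule exI[of _ "c 0"]) simp
  qed
  have ker: "\<forall>c. (\<forall>x. (\<Sum>i<s. \<Sum>j<ts ! i. c i j * g i j x) = 0) \<longleftrightarrow>
             (\<forall>i<s. \<forall>j<ts ! i. \<gamma> ^ (s - i) dvd c i j)"
  proof
    fix c
    have r: "(\<forall>i<s. \<forall>j<ts ! i. \<gamma> ^ (s - i) dvd c i j) \<longleftrightarrow> (\<forall>j<k. c 0 j = 0)"
    proof
      assume h: "\<forall>i<s. \<forall>j<ts ! i. \<gamma> ^ (s - i) dvd c i j"
      show "\<forall>j<k. c 0 j = 0"
      proof (intro allI impI)
        fix j assume "j < k" with h s_ge have "\<gamma> ^ s dvd c 0 j" by (auto simp: ts_def)
        with gs show "c 0 j = 0" by simp
      qed
    next
      assume h: "\<forall>j<k. c 0 j = 0"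
      show "\<forall>i<s. \<forall>j<ts ! i. \<gamma> ^ (s - i) dvd c i j"
      proof (intro allI impI)
        fix i j assume ij: "i < s" "j < ts ! i"
        then have "i = 0" "j < k" by (cases i; simp add: ts_def)+
        with h show "\<gamma> ^ (s - i) dvd c i j" by simp
      qed
    qed
    have l: "(\<forall>x. (\<Sum>i<s. \<Sum>j<ts ! i. c i j * g i j x) = 0) \<longleftrightarrow> (\<forall>j<k. c 0 j = 0)"
      unfolding ts_def sum_ts[OF s_ge]
    proof
      assume h: "\<forall>x. (\<Sum>j<k. c 0 j * g 0 j x) = 0"
      show "\<forall>j<k. c 0 j = 0"
      proof (intro allI impI)
        fix j0 assume j0: "j0 < k"
        define f where "f = (\<lambda>r::nat. if r = j0 then 1 else (0::nat))"
        have "\<forall>r<k. f r < q ^ s" using Q2 q2 by (simp add: f_def)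
        from col_exists[OF this] obtain x where x: "x < (q ^ s) ^ k"
          "\<forall>r<k. simplex_gen \<gamma> s q e k r x = rho \<gamma> s q e (f r)" by blast
        have "\<forall>r<k. g 0 r x = (if r = j0 then 1 else 0)"
          using x nQ rho0 rho1 by (simp add: g_def G_def f_def)
        then have "(\<Sum>j<k. c 0 j * g 0 j x) = (\<Sum>j<k. if j = j0 then c 0 j else 0)"
          by (intro sum.cong) auto
        also have "\<dots> = c 0 j0" using j0 by simp
        finally show "c 0 j0 = 0" using h by simp
      qed
    next
      assume "\<forall>j<k. c 0 j = 0"
      then show "\<forall>x. (\<Sum>j<k. c 0 j * g 0 j x) = 0" by simp
    qed
    show "(\<forall>x. (\<Sum>i<s. \<Sum>j<ts ! i. c i j * g i j x) = 0) \<longleftrightarrow>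
             (\<forall>i<s. \<forall>j<ts ! i. \<gamma> ^ (s - i) dvd c i j)" using l r by simp
  qed
  show ?thesis unfolding code_type_def ts_def[symmetric] n_def[symmetric]
    using len sub gin span ker by blast
qed

end
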